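(* Let $X$ be a finite set, $t_1<\dots<t_M$ real numbers and $(\mathcal{P}^{t_m})_{m\le M}$ partitions of $X$ with Multiscale Clustering Filtration $(K^{t_m})_{m\le M}$, and let $K:=K^{t_M}$. For every integer $1\le k\le\dim(K)-1$: (i) $c_k(t_1)=b_k(t_1)$ and $c_k(t_m)=\beta_k^{t_m}-\beta_k^{t_{m-1}}$ for $2\le m\le M$; (ii) $\beta_k^{t_m}=\sum_{l=1}^m c_k(t_l)$ for all $1\le m\le M$.
   Context: A partition of $X$ is a collection of non-empty pairwise disjoint subsets (clusters) whose union is $X$. For a finite non-empty set $C$, $\Delta C$ is the set of all non-empty subsets of $C$. The MCF is $K^{t_m}:=\bigcup_{l\le m}\bigcup_{C\in\mathcal{P}^{t_l}}\Delta C$ for $1\le m\le M$, with $K^{t_0}:=\emptyset$. $\dim(K)$ is the maximal dimension of a simplex in $K$. Homology is simplicial homology over $\mathbb{Z}_2$; $\beta_k^{t_m}$ is the dimension of $H_k(K^{t_m})$. For $0\le i\le j\le M$ let $\beta_k^{i,j}$ be the rank of the map $H_k(K^{t_i})\to H_k(K^{t_j})$ induced by inclusion. For $1\le i<j\le M$, $\mu_k^{t_i,t_j}:=\beta_k^{i,j-1}-\beta_k^{i,j}-\beta_k^{i-1,j-1}+\beta_k^{i-1,j}$ is the number of independent $k$-dimensional classes born at index $i$ and dying at index $j$, and $\mu_k^{t_i,\infty}:=\beta_k^{i,M}-\beta_k^{i-1,M}$ is the number born at index $i$ that never die. Define $b_k(t_m):=\sum_{l=m+1}^M\mu_k^{t_m,t_l}+\mu_k^{t_m,\infty}$,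 $d_k(t_m):=\sum_{l=1}^{m-1}\mu_k^{t_l,t_m}$, and the persistent conflict $c_k(t_m):=b_k(t_m)-d_k(t_m)$. *)

theory Defs
  imports Complex_Main "HOL-Library.Z2" "HOL-Library.Function_Algebras" "HOL-Library.Disjoint_Sets"
begin

definition Delta :: "'a set \<Rightarrow> 'a set set" where
  "Delta C = {S. S \<subseteq> C \<and> S \<noteq> {}}"

definition MCF :: "(nat \<Rightarrow> 'a set set) \<Rightarrow> nat \<Rightarrow> 'a set set" where
  "MCF P m = (\<Union>l\<in>{1..m}. \<Union>C\<in>P l. Delta C)"

text \<open>Dimension of a (finite) simplicial complex (0 for the empty complex; this
  only matters for the vacuous range of k).\<close>
definition cdim :: "'a set set \<Rightarrow> nat" where
  "cdim K = Max (insert 0 ((\<lambda>\<sigma>. card \<sigma> - 1) ` K))"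

type_synonym 'a chain = "'a set \<Rightarrow> bit"

definition cscale :: "bit \<Rightarrow> 'a chain \<Rightarrow> 'a chain" where
  "cscale a c = (\<lambda>\<sigma>. a * c \<sigma>)"

text \<open>k-chains of K: supported on k-simplices of K (k-simplex = card k+1).\<close>
definition chains :: "'a set set \<Rightarrow> nat \<Rightarrow> 'a chain set" where
  "chains K k = {c. \<forall>\<sigma>. c \<sigma> \<noteq> 0 \<longrightarrow> \<sigma> \<in> K \<and> card \<sigma> = Suc k}"

text \<open>Simplicial boundary over Z_2 (non-reduced: vertices have boundary 0).\<close>
definition bd :: "'a set set \<Rightarrow> 'a chain \<Rightarrow> 'a chain" where
  "bd K c = (\<lambda>\<tau>. if \<tau> = {} then 0
      else (\<Sum>\<sigma>\<in>{\<sigma>\<in>K. \<tau> \<subseteq> \<sigma> \<and> card \<sigma> = Suc (card \<tau>)}. c \<sigma>))"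

definition cycles :: "'a set set \<Rightarrow> nat \<Rightarrow> 'a chain set" where
  "cycles K k = {c \<in> chains K k. bd K c = 0}"

definition boundaries :: "'a set set \<Rightarrow> nat \<Rightarrow> 'a chain set" where
  "boundaries K k = bd K ` chains K (Suc k)"

definition zdim :: "'a chain set \<Rightarrow> nat" where
  "zdim V = vector_space.dim (cscale :: bit \<Rightarrow> 'a chain \<Rightarrow> 'a chain) V"

text \<open>Rank of H_k(K) \<rightarrow> H_k(L) induced by inclusion K \<subseteq> L:
  its image is (Z_k(K) + B_k(L)) / B_k(L).\<close>
definition hrank :: "'a set set \<Rightarrow> 'a set set \<Rightarrow> nat \<Rightarrow> nat" where
  "hrank K L k = zdim (cycles K k \<union> boundaries L k) - zdim (boundaries L k)"

definition betti :: "'a set set \<Rightarrow> nat \<Rightarrow> nat" where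
  "betti K k = zdim (cycles K k) - zdim (boundaries K k)"

definition pbetti :: "(nat \<Rightarrow> 'a set set) \<Rightarrow> nat \<Rightarrow> nat \<Rightarrow> nat \<Rightarrow> int" where
  "pbetti P k i j = int (hrank (MCF P i) (MCF P j) k)"

definition mu :: "(nat \<Rightarrow> 'a set set) \<Rightarrow> nat \<Rightarrow> nat \<Rightarrow> nat \<Rightarrow> int" where
  "mu P k i j = pbetti P k i (j - 1) - pbetti P k i j - pbetti P k (i - 1) (j - 1)
               + pbetti P k (i - 1) j"

definition mu_inf :: "(nat \<Rightarrow> 'a set set) \<Rightarrow> nat \<Rightarrow> nat \<Rightarrow> nat \<Rightarrow> int" where
  "mu_inf P M k i = pbetti P k i M - pbetti P k (i - 1) M"

definition births :: "(nat \<Rightarrow> 'a set set) \<Rightarrow> nat \<Rightarrow> nat \<Rightarrow> nat \<Rightarrow> int" where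
  "births P M k m = (\<Sum>l=m+1..M. mu P k m l) + mu_inf P M k m"

definition deaths :: "(nat \<Rightarrow> 'a set set) \<Rightarrow> nat \<Rightarrow> nat \<Rightarrow> int" where
  "deaths P k m = (\<Sum>l=1..m-1. mu P k l m)"

definition conflict :: "(nat \<Rightarrow> 'a set set) \<Rightarrow> nat \<Rightarrow> nat \<Rightarrow> nat \<Rightarrow> int" where
  "conflict P M k m = births P M k m - deaths P k m"

end

theory Submission
  imports Defs
begin

lemma vs_cscale: "vector_space (cscale :: bit \<Rightarrow> 'a chain \<Rightarrow> 'a chain)"
  by unfold_locales (auto simp: cscale_def fun_eq_iff algebra_simps)

lemma zdim_span_eq:
  assumes "module.span (cscale :: bit \<Rightarrow> 'a chain \<Rightarrow> 'a chain) A = module.span cscale B"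
  shows "zdim A = zdim B"
  using assms vector_space.dim_span[OF vs_cscale]
  unfolding zdim_def by metis

lemma bit_add_self: "(x::bit) + x = 0"
  by (cases x) (simp_all add: one_add_one)

definition dclosed :: "'a set set \<Rightarrow> bool" where
  "dclosed K = (\<forall>\<sigma>\<in>K. \<forall>\<tau>. \<tau> \<subseteq> \<sigma> \<and> \<tau> \<noteq> {} \<longrightarrow> \<tau> \<in> K)"

lemma inner_zero:
  assumes dc: "dclosed K" and rK: "\<rho> \<in> K" and tne: "\<tau> \<noteq> {}"
  shows "(\<Sum>\<sigma>\<in>{\<sigma>\<in>{\<sigma>\<in>K. \<tau> \<subseteq> \<sigma> \<and> card \<sigma> = Suc (card \<tau>)}. \<sigma> \<subseteq> \<rho> \<and> card \<rho> = Suc (card \<sigma>)}. (c::'a chain) \<rho>) = 0"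
proof (cases "{\<sigma>\<in>{\<sigma>\<in>K. \<tau> \<subseteq> \<sigma> \<and> card \<sigma> = Suc (card \<tau>)}. \<sigma> \<subseteq> \<rho> \<and> card \<rho> = Suc (card \<sigma>)} = {}")
  case True then show ?thesis by (simp only: True sum.empty)
next
  case False
  then obtain \<sigma>0 where "\<sigma>0 \<in> {\<sigma>\<in>{\<sigma>\<in>K. \<tau> \<subseteq> \<sigma> \<and> card \<sigma> = Suc (card \<tau>)}. \<sigma> \<subseteq> \<rho> \<and> card \<rho> = Suc (card \<sigma>)}"
    by (meson ex_in_conv)
  then have s0: "\<sigma>0 \<in> K" "\<tau> \<subseteq> \<sigma>0" "card \<sigma>0 = Suc (card \<tau>)" "\<sigma>0 \<subseteq> \<rho>" "card \<rho> = Suc (card \<sigma>0)"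
    by simp_all
  have fr: "finite \<rho>" using s0(5) by (metis card.infinite nat.distinct(1))
  have tr: "\<tau> \<subseteq> \<rho>" using s0 by blast
  have ft: "finite \<tau>" using fr tr finite_subset by blast
  have c2: "card (\<rho> - \<tau>) = 2" using s0 tr ft fr by (simp add: card_Diff_subset)
  then obtain a b where ab: "\<rho> - \<tau> = {a, b}" "a \<noteq> b" using card_2_iff[THEN iffD1, OF c2] by blast
  have anb: "a \<notin> \<tau>" "b \<notin> \<tau>" "a \<in> \<rho>" "b \<in> \<rho>" using ab by auto
  have eq: "{\<sigma>\<in>{\<sigma>\<in>K. \<tau> \<subseteq> \<sigma> \<and> card \<sigma> = Suc (card \<tau>)}. \<sigma> \<subseteq> \<rho> \<and> card \<rho> = Suc (card \<sigma>)}
      = {insert a \<tau>, insert b \<tau>}"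
  proof (rule set_eqI, rule iffI)
    fix \<sigma> assume "\<sigma> \<in> {\<sigma>\<in>{\<sigma>\<in>K. \<tau> \<subseteq> \<sigma> \<and> card \<sigma> = Suc (card \<tau>)}. \<sigma> \<subseteq> \<rho> \<and> card \<rho> = Suc (card \<sigma>)}"
    then have h: "\<tau> \<subseteq> \<sigma>" "card \<sigma> = Suc (card \<tau>)" "\<sigma> \<subseteq> \<rho>" by auto
    have fs: "finite \<sigma>" using h(3) fr finite_subset by blast
    have "card (\<sigma> - \<tau>) = 1" using h fs ft by (simp add: card_Diff_subset)
    then obtain x where x: "\<sigma> - \<tau> = {x}" by (meson card_1_singletonE)
    have "x \<in> \<rho> - \<tau>" using x h(3) by blast
    then have "x \<in> {a, b}" using ab(1) by simp
    moreover have "\<sigma> = \<tau> \<union> (\<sigma> - \<tau>)" using h(1) by auto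
    then have "\<sigma> = insert x \<tau>" using x by simp
    ultimately show "\<sigma> \<in> {insert a \<tau>, insert b \<tau>}" by auto
  next
    fix \<sigma> assume "\<sigma> \<in> {insert a \<tau>, insert b \<tau>}"
    then obtain x where x: "x \<in> {a,b}" "\<sigma> = insert x \<tau>" by auto
    have xn: "x \<notin> \<tau>" "x \<in> \<rho>" using x anb by auto
    have "insert x \<tau> \<subseteq> \<rho>" using xn(2) tr by simp
    then have "\<sigma> \<in> K" using dc rK x(2) unfolding dclosed_def by (metis insert_not_empty)
    moreover have "card \<sigma> = Suc (card \<tau>)" using x xn ft by simp
    moreover have "card \<rho> = Suc (card \<sigma>)" using calculation s0 by simp
    moreover have "\<tau> \<subseteq> \<sigma>" "\<sigma> \<subseteq> \<rho>" using x(2) xn(2) tr by auto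
    ultimately show "\<sigma> \<in> {\<sigma>\<in>{\<sigma>\<in>K. \<tau> \<subseteq> \<sigma> \<and> card \<sigma> = Suc (card \<tau>)}. \<sigma> \<subseteq> \<rho> \<and> card \<rho> = Suc (card \<sigma>)}"
      by simp
  qed
  have "insert a \<tau> \<noteq> insert b \<tau>" using anb ab by blast
  then show ?thesis unfolding eq by (simp add: card_insert_if)
qed

lemma bd_bd:
  assumes fin: "finite K" and dc: "dclosed K"
  shows "bd K (bd K c) = 0"
proof
  fix \<tau> :: "'a set"
  show "bd K (bd K c) \<tau> = 0 \<tau>"
  proof (cases "\<tau> = {}")
    case True then show ?thesis by (simp add: bd_def)
  next
    case False
    have "bd K (bd K c) \<tau> = (\<Sum>\<sigma>\<in>{\<sigma>\<in>K. \<tau> \<subseteq> \<sigma> \<and> card \<sigma> = Suc (card \<tau>)}. bd K c \<sigma>)"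
      using False by (simp add: bd_def[of K "bd K c"])
    also have "\<dots> = (\<Sum>\<sigma>\<in>{\<sigma>\<in>K. \<tau> \<subseteq> \<sigma> \<and> card \<sigma> = Suc (card \<tau>)}.
        (\<Sum>\<rho>\<in>{\<rho>\<in>K. \<sigma> \<subseteq> \<rho> \<and> card \<rho> = Suc (card \<sigma>)}. c \<rho>))"
    proof (intro sum.cong refl)
      fix \<sigma> assume "\<sigma> \<in> {\<sigma>\<in>K. \<tau> \<subseteq> \<sigma> \<and> card \<sigma> = Suc (card \<tau>)}"
      then have "\<sigma> \<noteq> {}" using False by blast
      then show "bd K c \<sigma> = (\<Sum>\<rho>\<in>{\<rho>\<in>K. \<sigma> \<subseteq> \<rho> \<and> card \<rho> = Suc (card \<sigma>)}. c \<rho>)"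
        by (simp add: bd_def)
    qed
    also have "\<dots> = (\<Sum>\<rho>\<in>K. \<Sum>\<sigma>\<in>{\<sigma>\<in>{\<sigma>\<in>K. \<tau> \<subseteq> \<sigma> \<and> card \<sigma> = Suc (card \<tau>)}. \<sigma> \<subseteq> \<rho> \<and> card \<rho> = Suc (card \<sigma>)}. c \<rho>)"
      by (rule sum.swap_restrict) (use fin in auto)
    also have "\<dots> = 0"
      using inner_zero[OF dc _ False] by (intro sum.neutral) auto
    finally show ?thesis by simp
  qed
qed

lemma bd_chain:
  assumes dc: "dclosed K" and c: "c \<in> chains K (Suc k)"
  shows "bd K c \<in> chains K k"
  unfolding chains_def
proof (intro CollectI allI impI)
  fix \<tau> assume nz: "bd K c \<tau> \<noteq> 0"
  then have tne: "\<tau> \<noteq> {}" by (auto simp: bd_def)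
  have "\<exists>\<sigma>\<in>{\<sigma>\<in>K. \<tau> \<subseteq> \<sigma> \<and> card \<sigma> = Suc (card \<tau>)}. c \<sigma> \<noteq> 0"
  proof (rule ccontr)
    assume "\<not> ?thesis"
    then have "(\<Sum>\<sigma>\<in>{\<sigma>\<in>K. \<tau> \<subseteq> \<sigma> \<and> card \<sigma> = Suc (card \<tau>)}. c \<sigma>) = 0"
      by (intro sum.neutral) blast
    with nz tne show False by (simp add: bd_def)
  qed
  then obtain \<sigma> where s: "\<sigma> \<in> K" "\<tau> \<subseteq> \<sigma>" "card \<sigma> = Suc (card \<tau>)" "c \<sigma> \<noteq> 0"
    by blast
  have "card \<sigma> = Suc (Suc k)" using s(4) c unfolding chains_def by blast
  then show "\<tau> \<in> K \<and> card \<tau> = Suc k" using s dc tne unfolding dclosed_def by auto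
qed

lemma B_sub_Z:
  assumes "finite K" "dclosed K"
  shows "boundaries K k \<subseteq> cycles K k"
  using bd_bd[OF assms] bd_chain[OF assms(2)]
  unfolding boundaries_def cycles_def by auto

lemma hrank_self:
  assumes "finite K" "dclosed K"
  shows "hrank K K k = betti K k"
proof -
  have "cycles K k \<union> boundaries K k = cycles K k" using B_sub_Z[OF assms] by blast
  then show ?thesis unfolding hrank_def betti_def by simp
qed

lemma hrank_empty: "hrank {} L k = 0"
proof -
  have ch: "chains {} k = ({0} :: 'a chain set)"
    unfolding chains_def by (auto simp: fun_eq_iff)
  have "bd {} (0 :: 'a chain) = 0" by (simp add: bd_def fun_eq_iff)
  then have "cycles {} k = ({0} :: 'a chain set)"
    unfolding cycles_def ch by auto
  then have "cycles {} k \<union> boundaries L k = insert 0 (boundaries L k)" by blast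
  moreover have sp: "module.span (cscale :: bit \<Rightarrow> 'a chain \<Rightarrow> 'a chain) (insert 0 (boundaries L k))
       = module.span cscale (boundaries L k)"
  proof -
    interpret v: vector_space "cscale :: bit \<Rightarrow> 'a chain \<Rightarrow> 'a chain" by (rule vs_cscale)
    have a: "0 \<in> v.span (boundaries L k)" by (rule v.span_zero)
    have b: "boundaries L k \<subseteq> v.span (boundaries L k)" by (rule v.span_superset)
    have c: "insert 0 (boundaries L k) \<subseteq> v.span (insert 0 (boundaries L k))" by (rule v.span_superset)
    have 1: "insert 0 (boundaries L k) \<subseteq> v.span (boundaries L k)" using a b by (rule insert_subsetI)
    have 2: "boundaries L k \<subseteq> v.span (insert 0 (boundaries L k))" using c by (meson insert_subset)
    show ?thesis using 1 2 by (simp only: v.span_eq)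
  qed
  moreover have "zdim (insert 0 (boundaries L k)) = zdim (boundaries L k)"
    by (rule zdim_span_eq) (rule sp)
  ultimately show ?thesis unfolding hrank_def by simp
qed

lemma tele1: "(\<Sum>l=1..n. ((g::nat\<Rightarrow>int) l - g (l-1))) = g n - g 0"
  by (induction n) (auto simp: sum.cl_ivl_Suc)

lemma tele2: "m \<le> M \<Longrightarrow> (\<Sum>l=m+1..M. ((f::nat\<Rightarrow>int) (l-1) - f l)) = f m - f M"
proof (induction M)
  case 0 then show ?case by simp
next
  case (Suc M)
  show ?case
  proof (cases "m = Suc M")
    case True then show ?thesis by simp
  next
    case False
    then have "m \<le> M" using Suc by simp
    then show ?thesis using Suc by (simp add: sum.cl_ivl_Suc)
  qed
qed

lemma conflict_formula:
  assumes "1 \<le> m" "m \<le> M"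
  shows "conflict P M k m = pbetti P k m m - pbetti P k (m-1) (m-1) + pbetti P k 0 (m-1) - pbetti P k 0 m"
proof -
  have b: "births P M k m = pbetti P k m m - pbetti P k (m-1) m"
  proof -
    have "(\<Sum>l=m+1..M. mu P k m l) = (\<Sum>l=m+1..M. (\<lambda>l. pbetti P k m l - pbetti P k (m-1) l) (l-1)
          - (\<lambda>l. pbetti P k m l - pbetti P k (m-1) l) l)"
      by (rule sum.cong) (auto simp: mu_def)
    also have "\<dots> = (pbetti P k m m - pbetti P k (m-1) m) - (pbetti P k m M - pbetti P k (m-1) M)"
      using tele2[OF assms(2)] by simp
    finally show ?thesis unfolding births_def mu_inf_def by simp
  qed
  have d: "deaths P k m = pbetti P k (m-1) (m-1) - pbetti P k (m-1) m - pbetti P k 0 (m-1) + pbetti P k 0 m"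
  proof -
    have "(\<Sum>l=1..m-1. mu P k l m) = (\<Sum>l=1..m-1. (\<lambda>l. pbetti P k l (m-1) - pbetti P k l m) l
          - (\<lambda>l. pbetti P k l (m-1) - pbetti P k l m) (l-1))"
      by (rule sum.cong) (auto simp: mu_def)
    also have "\<dots> = (pbetti P k (m-1) (m-1) - pbetti P k (m-1) m) - (pbetti P k 0 (m-1) - pbetti P k 0 m)"
      by (rule tele1)
    finally show ?thesis unfolding deaths_def by simp
  qed
  show ?thesis unfolding conflict_def b d by simp
qed

theorem proposition5:
  fixes X :: "'a set" and M :: nat and t :: "nat \<Rightarrow> real"
    and P :: "nat \<Rightarrow> 'a set set" and k :: nat
  assumes "finite X"
    and "\<And>i j. 1 \<le> i \<Longrightarrow> i < j \<Longrightarrow> j \<le> M \<Longrightarrow> t i < t j"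
    and "\<And>m. 1 \<le> m \<Longrightarrow> m \<le> M \<Longrightarrow> partition_on X (P m)"
    and "1 \<le> k" and "k \<le> cdim (MCF P M) - 1"
  shows "conflict P M k 1 = births P M k 1
       \<and> (\<forall>m\<in>{2..M}. conflict P M k m = int (betti (MCF P m) k) - int (betti (MCF P (m - 1)) k))
       \<and> (\<forall>m\<in>{1..M}. int (betti (MCF P m) k) = (\<Sum>l=1..m. conflict P M k l))"
proof -
  have sub: "MCF P i \<subseteq> Pow X" if "i \<le> M" for i
  proof
    fix s assume "s \<in> MCF P i"
    then obtain l C where "l \<in> {1..i}" "C \<in> P l" "s \<in> Delta C" unfolding MCF_def by blast
    moreover have "partition_on X (P l)" using assms(3) calculation that by auto
    ultimately show "s \<in> Pow X" unfolding Delta_def partition_on_def by blast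
  qed
  have fin: "finite (MCF P i)" if "i \<le> M" for i
    using sub[OF that] assms(1) finite_subset by blast
  have dc: "dclosed (MCF P i)" for i
    unfolding dclosed_def MCF_def Delta_def by blast
  have pb_self: "pbetti P k i i = int (betti (MCF P i) k)" if "i \<le> M" for i
    unfolding pbetti_def using hrank_self[OF fin[OF that] dc] by simp
  have pb0: "pbetti P k 0 j = 0" for j
    unfolding pbetti_def by (simp add: MCF_def hrank_empty)
  have cf: "conflict P M k m = int (betti (MCF P m) k) - int (betti (MCF P (m - 1)) k)"
    if "1 \<le> m" "m \<le> M" for m
    using conflict_formula[OF that, of P k] pb_self[OF that(2)] pb_self[of "m-1"] that pb0 by simp
  have b0: "int (betti (MCF P 0) k) = 0"
    using pb_self[of 0] pb0[of 0] by simp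
  have p1: "conflict P M k 1 = births P M k 1"
    unfolding conflict_def deaths_def by simp
  have p2: "\<forall>m\<in>{2..M}. conflict P M k m = int (betti (MCF P m) k) - int (betti (MCF P (m - 1)) k)"
    using cf by auto
  have p3: "int (betti (MCF P m) k) = (\<Sum>l=1..m. conflict P M k l)" if "m \<in> {1..M}" for m
  proof -
    have "(\<Sum>l=1..m. conflict P M k l) = (\<Sum>l=1..m. int (betti (MCF P l) k) - int (betti (MCF P (l - 1)) k))"
      using that cf by (intro sum.cong) auto
    also have "\<dots> = int (betti (MCF P m) k)"
      using tele1[of "\<lambda>l. int (betti (MCF P l) k)" m] b0 by simp
    finally show ?thesis by simp
  qed
  show ?thesis using p1 p2 p3 by blast
qed

end
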